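(* Let $k=\mathbb{F}_q$ with $q>3$ odd, $A=M_{2n}(k)$, $V=k^{2n}$, $J_{2n}=\begin{pmatrix}0&I_n\\-I_n&0\end{pmatrix}$, $[x,y]=\langle x,yJ_{2n}\rangle$ with $\langle\cdot,\cdot\rangle$ the standard dot product, and $a^\sim=J_{2n}a^{t}J_{2n}^{-1}$. Let $M=V^2$ with $A$ acting by $(x,y)a=(xa,ya)$, $\psi$ a nontrivial character of $k^+$, $\chi((x,y),(v,z))=\psi([x,z]-[y,v])$, and $\gamma(u,(x,y))=\psi([xu,y])$ for $u\in A^s_{-,\sim}=\{u\in A\mid u^\sim=u\}$. Let $\mathcal{U}(\gamma,\chi)$ be the group of $A$-linear automorphisms $\beta$ of $M$ such that $\gamma(u,\beta(x,y))=\gamma(u,(x,y))$ for all $u,(x,y)$ and $\chi(\beta(x,y),\beta(v,z))=\chi((x,y),(v,z))$ for all $(x,y),(v,z)$. Then $\mathcal{U}(\gamma,\chi)\cong\mathrm{SL}_2(k)$. *)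

theory Defs
  imports "HOL-Analysis.Analysis" "HOL-Algebra.Group"
begin

text \<open>Row vectors in k^(2n) are indexed by the type 'n + 'n (first block Inl, second Inr).\<close>

definition Jmat :: "('a::ring_1)^('n::finite + 'n)^('n + 'n)" where
  "Jmat = (\<chi> i j. case (i, j) of
       (Inl a, Inr b) \<Rightarrow> (if a = b then 1 else 0)
     | (Inr a, Inl b) \<Rightarrow> (if a = b then -1 else 0)
     | _ \<Rightarrow> 0)"

definition dotp :: "('a::comm_ring_1)^'m \<Rightarrow> 'a^'m \<Rightarrow> 'a" where
  "dotp x y = (\<Sum>i\<in>UNIV. x $ i * y $ i)"

definition sympf :: "('a::comm_ring_1)^('n::finite + 'n) \<Rightarrow> 'a^('n + 'n) \<Rightarrow> 'a" where
  "sympf x y = dotp x (y v* Jmat)"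

definition tilde :: "('a::field)^('n::finite + 'n)^('n + 'n) \<Rightarrow> 'a^('n + 'n)^('n + 'n)" where
  "tilde a = Jmat ** transpose a ** matrix_inv Jmat"

definition Asym :: "(('a::field)^('n::finite + 'n)^('n + 'n)) set" where
  "Asym = {u. tilde u = u}"

type_synonym ('a, 'n) modM = "('a^('n + 'n)) \<times> ('a^('n + 'n))"

definition actM :: "(('a::comm_ring_1), 'n::finite) modM \<Rightarrow> 'a^('n + 'n)^('n + 'n) \<Rightarrow> ('a, 'n) modM" where
  "actM m a = (fst m v* a, snd m v* a)"

definition addM :: "(('a::comm_ring_1), 'n::finite) modM \<Rightarrow> ('a, 'n) modM \<Rightarrow> ('a, 'n) modM" where
  "addM m m' = (fst m + fst m', snd m + snd m')"

definition chiM :: "('a \<Rightarrow> complex) \<Rightarrow> (('a::comm_ring_1), 'n::finite) modM \<Rightarrow> ('a, 'n) modM \<Rightarrow> complex" where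
  "chiM psi m m' = psi (sympf (fst m) (snd m') - sympf (snd m) (fst m'))"

definition gammaM :: "('a \<Rightarrow> complex) \<Rightarrow> ('a::comm_ring_1)^('n::finite + 'n)^('n + 'n) \<Rightarrow> ('a, 'n) modM \<Rightarrow> complex" where
  "gammaM psi u m = psi (sympf (fst m v* u) (snd m))"

definition A_linear_aut :: "((('a::comm_ring_1), 'n::finite) modM \<Rightarrow> ('a, 'n) modM) \<Rightarrow> bool" where
  "A_linear_aut \<beta> \<longleftrightarrow> bij \<beta> \<and> (\<forall>m m'. \<beta> (addM m m') = addM (\<beta> m) (\<beta> m'))
     \<and> (\<forall>m a. \<beta> (actM m a) = actM (\<beta> m) a)"

definition U_set :: "('a \<Rightarrow> complex) \<Rightarrow> (((('a::field), 'n::finite) modM \<Rightarrow> ('a, 'n) modM)) set" where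
  "U_set psi = {\<beta>. A_linear_aut \<beta>
      \<and> (\<forall>u\<in>Asym. \<forall>m. gammaM psi u (\<beta> m) = gammaM psi u m)
      \<and> (\<forall>m m'. chiM psi (\<beta> m) (\<beta> m') = chiM psi m m')}"

definition U_group :: "('a \<Rightarrow> complex) \<Rightarrow> ((('a::field), 'n::finite) modM \<Rightarrow> ('a, 'n) modM) monoid" where
  "U_group psi = \<lparr>carrier = U_set psi, mult = (\<circ>), one = id\<rparr>"

definition SL2_group :: "(('a::field)^2^2) monoid" where
  "SL2_group = \<lparr>carrier = {m. det m = 1}, mult = (**), one = mat 1\<rparr>"

definition additive_character :: "('a::ab_group_add \<Rightarrow> complex) \<Rightarrow> bool" where
  "additive_character psi \<longleftrightarrow> (\<forall>a b. psi (a + b) = psi a * psi b) \<and> (\<forall>a. norm (psi a) = 1)"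

end

theory Submission
  imports Defs "HOL-Number_Theory.Residues"
begin


lemma sum_plus_univ:
  fixes f :: "('a::finite + 'a) \<Rightarrow> 'b::comm_monoid_add"
  shows "sum f UNIV = (\<Sum>a\<in>UNIV. f (Inl a)) + (\<Sum>a\<in>UNIV. f (Inr a))"
proof -
  have "sum f UNIV = sum f (UNIV <+> UNIV)" by simp
  also have "\<dots> = sum (f \<circ> Inl) UNIV + sum (f \<circ> Inr) UNIV" by (rule sum.Plus) auto
  finally show ?thesis by simp
qed

lemma J_LL [simp]: "(Jmat :: ('a::ring_1)^('n::finite + 'n)^('n + 'n)) $ Inl a $ Inl b = 0"
  by (simp add: Jmat_def)
lemma J_RR [simp]: "(Jmat :: ('a::ring_1)^('n::finite + 'n)^('n + 'n)) $ Inr a $ Inr b = 0"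
  by (simp add: Jmat_def)
lemma J_LR [simp]: "(Jmat :: ('a::ring_1)^('n::finite + 'n)^('n + 'n)) $ Inl a $ Inr b = (if a = b then 1 else 0)"
  by (simp add: Jmat_def)
lemma J_RL [simp]: "(Jmat :: ('a::ring_1)^('n::finite + 'n)^('n + 'n)) $ Inr a $ Inl b = (if a = b then -1 else 0)"
  by (simp add: Jmat_def)

definition Jn :: "('a::ring_1)^('n::finite + 'n)^('n + 'n)" where
  "Jn = (\<chi> i j. - (Jmat $ i $ j))"

lemma Jn_nth [simp]: "Jn $ i $ j = - (Jmat $ i $ j)" by (simp add: Jn_def)

lemma forall_sum_type: "(\<forall>i. P i) \<longleftrightarrow> (\<forall>a. P (Inl a)) \<and> (\<forall>a. P (Inr a))"
  by (metis sum.exhaust)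

lemma J_Jn: "(Jmat :: ('a::comm_ring_1)^('n::finite + 'n)^('n + 'n)) ** Jn = mat 1"
  by (simp add: vec_eq_iff matrix_matrix_mult_def mat_def forall_sum_type sum_plus_univ if_distrib cong: if_cong)

lemma Jn_J: "(Jn :: ('a::comm_ring_1)^('n::finite + 'n)^('n + 'n)) ** Jmat = mat 1"
  by (simp add: vec_eq_iff matrix_matrix_mult_def mat_def forall_sum_type sum_plus_univ if_distrib cong: if_cong)

lemma transpose_J: "transpose (Jmat :: ('a::comm_ring_1)^('n::finite + 'n)^('n + 'n)) = Jn"
  by (simp add: vec_eq_iff transpose_def forall_sum_type)

lemma Jn_Jn: "(Jn :: ('a::comm_ring_1)^('n::finite + 'n)^('n + 'n)) ** Jn = (\<chi> i j. if i = j then -1 else 0)"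
  by (simp add: vec_eq_iff matrix_matrix_mult_def mat_def forall_sum_type sum_plus_univ if_distrib cong: if_cong)

lemma matrix_inv_J: "matrix_inv (Jmat :: ('a::comm_ring_1)^('n::finite + 'n)^('n + 'n)) = Jn"
proof -
  let ?P = "\<lambda>A'. (Jmat :: ('a)^('n + 'n)^('n + 'n)) ** A' = mat 1 \<and> A' ** Jmat = mat 1"
  have "?P Jn" using J_Jn Jn_J by blast
  hence P: "?P (matrix_inv Jmat)" unfolding matrix_inv_def by (rule someI)
  have "matrix_inv Jmat = matrix_inv Jmat ** ((Jmat :: ('a)^('n + 'n)^('n + 'n)) ** Jn)" by (simp add: J_Jn)
  also have "\<dots> = (matrix_inv Jmat ** Jmat) ** Jn" by (simp add: matrix_mul_assoc)
  also have "\<dots> = Jn" using P by simp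
  finally show ?thesis .
qed

lemma dotp_vm:
  fixes x :: "('a::comm_ring_1)^'m::finite"
  shows "dotp (x v* A) (x v* B) = (\<Sum>i\<in>UNIV. \<Sum>k\<in>UNIV. x$i * x$k * (A ** transpose B)$i$k)"
proof -
  have "dotp (x v* A) (x v* B) = (\<Sum>j\<in>UNIV. \<Sum>i\<in>UNIV. \<Sum>k\<in>UNIV. x$i * x$k * (A$i$j * B$k$j))"
    unfolding dotp_def vector_matrix_mult_def vec_lambda_beta sum_product
    by (intro sum.cong refl) (simp add: mult_ac)
  also have "\<dots> = (\<Sum>i\<in>UNIV. \<Sum>j\<in>UNIV. \<Sum>k\<in>UNIV. x$i * x$k * (A$i$j * B$k$j))"
    by (rule sum.swap)
  also have "\<dots> = (\<Sum>i\<in>UNIV. \<Sum>k\<in>UNIV. \<Sum>j\<in>UNIV. x$i * x$k * (A$i$j * B$k$j))"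
    by (rule sum.cong[OF refl], rule sum.swap)
  also have "\<dots> = (\<Sum>i\<in>UNIV. \<Sum>k\<in>UNIV. x$i * x$k * (A ** transpose B)$i$k)"
    by (simp add: matrix_matrix_mult_def transpose_def sum_distrib_left)
  finally show ?thesis .
qed

lemma quad_antisym_zero:
  fixes x :: "('a::field)^'m::finite"
  assumes anti: "\<And>i k. P$k$i = - P$i$k" and two: "(2::'a) \<noteq> 0"
  shows "(\<Sum>i\<in>UNIV. \<Sum>k\<in>UNIV. x$i * x$k * P$i$k) = 0"
proof -
  let ?S = "(\<Sum>i\<in>UNIV. \<Sum>k\<in>UNIV. x$i * x$k * P$i$k)"
  have h: "x$i * x$k * P$i$k = - (x$k * x$i * P$k$i)" for i k using anti[of i k] by (simp add: mult_ac)
  have "?S = (\<Sum>k\<in>UNIV. \<Sum>i\<in>UNIV. x$i * x$k * P$i$k)" by (rule sum.swap)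
  also have "\<dots> = (\<Sum>k\<in>UNIV. \<Sum>i\<in>UNIV. - (x$k * x$i * P$k$i))"
    by (rule sum.cong[OF refl])+ (rule h)
  also have "\<dots> = - ?S" by (simp add: sum_negf)
  finally have "?S = - ?S" .
  hence "2 * ?S = 0" by simp
  thus ?thesis using two by simp
qed

lemma neg_diag: "((X::('a::comm_ring_1)^'m::finite^'l) ** (\<chi> i j. if i = j then -1 else 0)) $ i $ k = - X $ i $ k"
  by (simp add: matrix_matrix_mult_def if_distrib cong: if_cong)

lemma alt_form:
  fixes u :: "('a::field)^('n::finite + 'n)^('n + 'n)"
  assumes "u \<in> Asym" and two: "(2::'a) \<noteq> 0"
  shows "sympf (x v* u) x = 0"
proof -
  have u: "Jmat ** transpose u ** Jn = u" using assms(1) by (simp add: Asym_def tilde_def matrix_inv_J)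
  define P where "P = u ** transpose (Jmat :: ('a)^('n + 'n)^('n + 'n))"
  have "P = Jmat ** transpose u ** (Jn ** Jn)"
    unfolding P_def transpose_J by (subst u[symmetric]) (simp add: matrix_mul_assoc)
  hence P1: "P $ i $ k = - (Jmat ** transpose u) $ i $ k" for i k
    by (simp add: Jn_Jn neg_diag)
  have tP: "transpose P = Jmat ** transpose u"
    unfolding P_def by (simp add: matrix_transpose_mul)
  have P2: "P $ k $ i = (Jmat ** transpose u) $ i $ k" for i k
  proof -
    have "transpose P $ i $ k = P $ k $ i" by (simp add: Finite_Cartesian_Product.transpose_def)
    thus ?thesis using tP by simp
  qed
  have anti: "P $ k $ i = - P $ i $ k" for i k unfolding P1[where i=i and k=k] P2[where i=i and k=k] by simp
  have "sympf (x v* u) x = (\<Sum>i\<in>UNIV. \<Sum>k\<in>UNIV. x$i * x$k * P$i$k)"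
    unfolding sympf_def P_def by (rule dotp_vm)
  also have "\<dots> = 0" by (rule quad_antisym_zero[OF anti two])
  finally show ?thesis .
qed



definition betaM :: "'a^2^2 \<Rightarrow> (('a::comm_ring_1), 'n::finite) modM \<Rightarrow> ('a, 'n) modM" where
  "betaM g m = (g$1$1 *s fst m + g$1$2 *s snd m, g$2$1 *s fst m + g$2$2 *s snd m)"

lemma betaM_comp: "betaM g \<circ> betaM h = betaM (g ** h)"
  by (rule ext) (simp add: betaM_def matrix_matrix_mult_def sum_2 vec_eq_iff algebra_simps)

lemma betaM_one: "betaM (mat 1) = id"
  by (rule ext) (simp add: betaM_def mat_def)

definition inv2 :: "('a::comm_ring_1)^2^2 \<Rightarrow> 'a^2^2" where
  "inv2 g = (\<chi> i j. if i = 1 then (if j = 1 then g$2$2 else - g$1$2) else (if j = 1 then - g$2$1 else g$1$1))"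

lemma inv2_r: "det g = 1 \<Longrightarrow> g ** inv2 g = mat 1"
  by (simp add: det_2 inv2_def vec_eq_iff forall_2 matrix_matrix_mult_def sum_2 mat_def algebra_simps)

lemma inv2_l: "det g = 1 \<Longrightarrow> inv2 g ** g = mat 1"
  by (simp add: det_2 inv2_def vec_eq_iff forall_2 matrix_matrix_mult_def sum_2 mat_def algebra_simps)

lemma bij_betaM: "det g = 1 \<Longrightarrow> bij (betaM g)"
  by (rule o_bij[of "betaM (inv2 g)"]) (simp_all add: betaM_comp inv2_r inv2_l betaM_one)

lemma betaM_add: "betaM g (addM m m') = addM (betaM g m) (betaM g m')"
  by (simp add: betaM_def addM_def algebra_simps vector_add_ldistrib)

lemma betaM_act:
  fixes g :: "('a::field)^2^2"
  shows "betaM g (actM m a) = actM (betaM g m) a"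
  by (simp add: betaM_def actM_def vector_matrix_left_distrib scalar_vector_matrix_assoc)

lemma sympf_add1: "sympf (x + y) z = sympf x z + sympf y z"
  by (simp add: sympf_def dotp_def algebra_simps sum.distrib)
lemma sympf_add2: "sympf x (y + z) = sympf x y + sympf x z"
  by (simp add: sympf_def dotp_def vector_matrix_left_distrib algebra_simps sum.distrib)
lemma sympf_smult1: "sympf (c *s x) z = c * sympf x z"
  by (simp add: sympf_def dotp_def sum_distrib_left mult_ac)
lemma sympf_smult2:
  fixes y :: "('a::field)^('n::finite + 'n)"
  shows "sympf x (c *s y) = c * sympf x y"
  by (simp add: sympf_def dotp_def scalar_vector_matrix_assoc sum_distrib_left mult_ac)

lemma chi_betaM:
  fixes g :: "('a::field)^2^2" and m m' :: "('a, 'n::finite) modM"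
  shows "sympf (fst (betaM g m)) (snd (betaM g m')) - sympf (snd (betaM g m)) (fst (betaM g m'))
    = det g * (sympf (fst m) (snd m') - sympf (snd m) (fst m'))"
  by (simp add: betaM_def det_2 sympf_add1 sympf_add2 sympf_smult1 sympf_smult2 algebra_simps)


lemma two_ne_zero_field:
  assumes "odd CARD('k::{field,finite})"
  shows "(2::'k) \<noteq> 0"
proof
  assume h: "(2::'k) = 0"
  have "of_nat 2 = (0::'k)" using h by simp
  hence d2: "CHAR('k) dvd 2" by (simp only: of_nat_eq_0_iff_char_dvd)
  have "CHAR('k) \<noteq> 1"
  proof
    assume "CHAR('k) = 1"
    hence "of_nat 1 = (0::'k)" by (metis of_nat_CHAR)
    thus False by simp
  qed
  moreover have "CHAR('k) \<le> 2" using d2 by (rule dvd_imp_le) simp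
  moreover have "CHAR('k) \<noteq> 0" using d2 by (intro notI) simp
  ultimately have "CHAR('k) = 2" by linarith
  hence "2 dvd CARD('k)" using CHAR_dvd_CARD[where 'a='k] by simp
  thus False using assms by simp
qed

lemma gamma_betaM:
  fixes g :: "('a::field)^2^2" and m :: "('a, 'n::finite) modM"
  assumes "u \<in> Asym" and two: "(2::'a) \<noteq> 0" and det: "det g = 1"
  shows "sympf (fst (betaM g m) v* u) (snd (betaM g m)) = sympf (fst m v* u) (snd m)"
proof -
  obtain x y where m: "m = (x, y)" by (cases m)
  have xx: "sympf (x v* u) x = 0" and yy: "sympf (y v* u) y = 0" and ss: "sympf ((x + y) v* u) (x + y) = 0"
    using alt_form[OF assms(1) two] by blast+
  have "sympf (x v* u) y + sympf (y v* u) x = 0"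
    using ss xx yy by (simp add: vector_matrix_left_distrib sympf_add1 sympf_add2 algebra_simps)
  hence sk: "sympf (y v* u) x = - sympf (x v* u) y" by (simp add: add_eq_0_iff)
  have "sympf (fst (betaM g m) v* u) (snd (betaM g m)) = det g * sympf (x v* u) y"
    by (simp add: m betaM_def det_2 vector_matrix_left_distrib scalar_vector_matrix_assoc
        sympf_add1 sympf_add2 sympf_smult1 sympf_smult2 xx yy sk algebra_simps)
  thus ?thesis using det m by simp
qed

definition e0 :: "('a::comm_ring_1)^('n::finite + 'n)" where "e0 = axis (Inl undefined) 1"

definition Emat :: "('a::comm_ring_1)^('n::finite + 'n)^('n + 'n)" where
  "Emat = (\<chi> i j. if i = Inl undefined \<and> j = Inl undefined then 1 else 0)"

definition rowmat :: "('a::comm_ring_1)^'m \<Rightarrow> 'a^'m^('n::finite + 'n)" where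
  "rowmat x = (\<chi> i j. x$j)"

lemma delta_l: "(if i = a then c else 0) * (z::'a::comm_ring_1) = (if i = a then c * z else 0)" by simp
lemma delta_r: "(z::'a::comm_ring_1) * (if i = a then c else 0) = (if i = a then z * c else 0)" by simp

lemma e0_rowmat: "(e0 :: ('a::comm_ring_1)^('n::finite + 'n)) v* rowmat x = x"
  by (simp add: e0_def rowmat_def vector_matrix_mult_def axis_def vec_eq_iff delta_l)

lemma v_Emat: "(v :: ('a::comm_ring_1)^('n::finite + 'n)) v* Emat = (v $ Inl undefined) *s e0"
  by (simp add: e0_def Emat_def vector_matrix_mult_def axis_def vec_eq_iff delta_l delta_r)

lemma e0_nth: "(e0 :: ('a::comm_ring_1)^('n::finite + 'n)) $ Inl undefined = 1"
  by (simp add: e0_def axis_def)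

definition extM :: "((('a::comm_ring_1), 'n::finite) modM \<Rightarrow> ('a, 'n) modM) \<Rightarrow> 'a^2^2" where
  "extM \<beta> = (\<chi> i j. (if i = 1 then fst else snd) (\<beta> (if j = 1 then (e0, 0) else (0, e0))) $ Inl undefined)"

lemma extM_betaM: "extM (betaM g :: (('a::comm_ring_1), 'n::finite) modM \<Rightarrow> ('a, 'n) modM) = g"
  by (simp add: extM_def betaM_def vec_eq_iff forall_2 e0_nth)

lemma lin_betaM:
  fixes \<beta> :: "(('a::field), 'n::finite) modM \<Rightarrow> ('a, 'n) modM"
  assumes "A_linear_aut \<beta>"
  shows "\<beta> = betaM (extM \<beta>)"
proof
  fix m :: "('a, 'n) modM"
  have add: "\<beta> (addM p q) = addM (\<beta> p) (\<beta> q)" for p q using assms unfolding A_linear_aut_def by blast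
  have act: "\<beta> (actM p a) = actM (\<beta> p) a" for p a using assms unfolding A_linear_aut_def by blast
  have "\<beta> (e0, 0) = \<beta> (actM (e0, 0) Emat)" by (simp add: actM_def v_Emat e0_nth)
  also have "\<dots> = (extM \<beta> $1$1 *s e0, extM \<beta> $2$1 *s e0)"
    by (subst act) (simp add: actM_def v_Emat extM_def)
  finally have h1: "\<beta> (e0, 0) = (extM \<beta> $1$1 *s e0, extM \<beta> $2$1 *s e0)" .
  have "\<beta> (0, e0) = \<beta> (actM (0, e0) Emat)" by (simp add: actM_def v_Emat e0_nth)
  also have "\<dots> = (extM \<beta> $1$2 *s e0, extM \<beta> $2$2 *s e0)"
    by (subst act) (simp add: actM_def v_Emat extM_def)
  finally have h2: "\<beta> (0, e0) = (extM \<beta> $1$2 *s e0, extM \<beta> $2$2 *s e0)" .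
  obtain x y where m: "m = (x, y)" by (cases m)
  have "m = addM (actM (e0, 0) (rowmat x)) (actM (0, e0) (rowmat y))"
    by (simp add: m addM_def actM_def e0_rowmat)
  hence "\<beta> m = addM (actM (\<beta> (e0, 0)) (rowmat x)) (actM (\<beta> (0, e0)) (rowmat y))"
    by (simp add: add act)
  also have "\<dots> = betaM (extM \<beta>) m"
    by (simp add: h1 h2 m addM_def actM_def betaM_def scalar_vector_matrix_assoc e0_rowmat)
  finally show "\<beta> m = betaM (extM \<beta>) m" .
qed

lemma sympf_e0: "sympf (e0 :: ('a::comm_ring_1)^('n::finite + 'n)) (axis (Inr undefined) s) = - s"
  by (simp add: sympf_def dotp_def e0_def axis_def vector_matrix_mult_def delta_l delta_r)

lemma sympf_zero1: "sympf 0 y = 0"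
  by (simp add: sympf_def dotp_def)

lemma det_one_from_chi:
  fixes psi :: "'a::field \<Rightarrow> complex" and g :: "'a^2^2"
  assumes ch: "additive_character psi" and nt: "\<exists>a. psi a \<noteq> 1"
    and pres: "\<forall>m m'. chiM psi (betaM g m :: ('a, 'n::finite) modM) (betaM g m') = chiM psi m m'"
  shows "det g = 1"
proof (rule ccontr)
  assume d: "det g \<noteq> 1"
  obtain a where a: "psi a \<noteq> 1" using nt by blast
  have key: "psi (det g * t) = psi t" for t
  proof -
    let ?m = "(e0, 0) :: ('a, 'n) modM" and ?m' = "(0, axis (Inr undefined) (-t)) :: ('a, 'n) modM"
    have "chiM psi (betaM g ?m) (betaM g ?m') = chiM psi ?m ?m'" using pres by blast
    thus ?thesis by (simp add: chiM_def chi_betaM sympf_e0 sympf_zero1)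
  qed
  define t where "t = a / (det g - 1)"
  have "det g * t = t + a" using d by (simp add: t_def field_simps)
  hence "psi t = psi t * psi a" using key[of t] ch by (simp add: additive_character_def)
  moreover have "psi t \<noteq> 0" using ch by (metis additive_character_def norm_zero zero_neq_one)
  ultimately show False using a by simp
qed

theorem mainTheorem7:
  fixes psi :: "'k::{field,finite} \<Rightarrow> complex"
  assumes "odd CARD('k)" and "CARD('k) > 3"
    and "additive_character psi" and "\<exists>a. psi a \<noteq> 1"
  shows "(U_group psi :: (('k, 'n::finite) modM \<Rightarrow> ('k, 'n) modM) monoid) \<cong> (SL2_group :: ('k^2^2) monoid)"
proof -
  have two: "(2::'k) \<noteq> 0" using two_ne_zero_field assms(1) by blast
  have inU: "(betaM g :: ('k, 'n) modM \<Rightarrow> ('k, 'n) modM) \<in> U_set psi" if "det g = 1" for g :: "'k^2^2"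
  proof -
    have "A_linear_aut (betaM g :: ('k, 'n) modM \<Rightarrow> ('k, 'n) modM)"
      unfolding A_linear_aut_def using bij_betaM[OF that] betaM_add betaM_act by blast
    moreover have "\<forall>u\<in>Asym. \<forall>m. gammaM psi u (betaM g m :: ('k, 'n) modM) = gammaM psi u m"
      unfolding gammaM_def by (auto simp: gamma_betaM[OF _ two that])
    moreover have "\<forall>m m'. chiM psi (betaM g m :: ('k, 'n) modM) (betaM g m') = chiM psi m m'"
      unfolding chiM_def by (simp add: chi_betaM that)
    ultimately show ?thesis unfolding U_set_def by blast
  qed
  have U: "\<beta> = betaM (extM \<beta>) \<and> det (extM \<beta>) = 1" if "\<beta> \<in> U_set psi"
    for \<beta> :: "('k, 'n) modM \<Rightarrow> ('k, 'n) modM"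
  proof -
    have b: "\<beta> = betaM (extM \<beta>)" using that lin_betaM unfolding U_set_def by blast
    obtain g where g: "g = extM \<beta>" by blast
    have bg: "\<beta> = betaM g" using b g by simp
    have ch: "\<forall>m m'. chiM psi (\<beta> m) (\<beta> m') = chiM psi m m'"
      using that unfolding U_set_def by blast
    have "\<forall>m m'. chiM psi (betaM g m :: ('k, 'n) modM) (betaM g m') = chiM psi m m'"
      using ch unfolding bg .
    hence "det g = 1" using det_one_from_chi assms(3,4) by blast
    thus ?thesis using b g by blast
  qed
  have "extM \<in> iso (U_group psi :: (('k, 'n) modM \<Rightarrow> ('k, 'n) modM) monoid) (SL2_group :: ('k^2^2) monoid)"
    unfolding iso_def hom_def U_group_def SL2_group_def
  proof (simp, intro conjI)
    show "extM \<in> (U_set psi :: ((('k, 'n) modM \<Rightarrow> ('k, 'n) modM) set)) \<rightarrow> {m. det m = 1}"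
    proof
      fix x :: "('k, 'n) modM \<Rightarrow> ('k, 'n) modM" assume "x \<in> (U_set psi :: ((('k, 'n) modM \<Rightarrow> ('k, 'n) modM) set))"
      thus "extM x \<in> {m. det m = 1}" using U by blast
    qed
    show "\<forall>x\<in>(U_set psi :: ((('k, 'n) modM \<Rightarrow> ('k, 'n) modM) set)). \<forall>y\<in>(U_set psi :: ((('k, 'n) modM \<Rightarrow> ('k, 'n) modM) set)). extM (x \<circ> y) = extM x ** extM y"
    proof (intro ballI)
      fix x y :: "('k, 'n) modM \<Rightarrow> ('k, 'n) modM" assume "x \<in> (U_set psi :: ((('k, 'n) modM \<Rightarrow> ('k, 'n) modM) set))" "y \<in> (U_set psi :: ((('k, 'n) modM \<Rightarrow> ('k, 'n) modM) set))"
      hence "x = betaM (extM x)" "y = betaM (extM y)" using U by blast+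
      hence "x \<circ> y = betaM (extM x ** extM y)" by (metis betaM_comp)
      thus "extM (x \<circ> y) = extM x ** extM y" by (simp add: extM_betaM)
    qed
    show "bij_betw extM ((U_set psi :: ((('k, 'n) modM \<Rightarrow> ('k, 'n) modM) set))) {m. det m = 1}"
    proof (rule bij_betw_imageI)
      show "inj_on extM ((U_set psi :: ((('k, 'n) modM \<Rightarrow> ('k, 'n) modM) set)))" using U by (metis inj_onI)
      show "extM ` (U_set psi :: ((('k, 'n) modM \<Rightarrow> ('k, 'n) modM) set)) = {m. det m = 1}"
      proof
        show "extM ` (U_set psi :: ((('k, 'n) modM \<Rightarrow> ('k, 'n) modM) set)) \<subseteq> {m. det m = 1}" using U by auto
        show "{m. det m = 1} \<subseteq> extM ` (U_set psi :: ((('k, 'n) modM \<Rightarrow> ('k, 'n) modM) set))"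
        proof
          fix g assume "g \<in> {m :: 'k^2^2. det m = 1}"
          hence "betaM g \<in> (U_set psi :: ((('k, 'n) modM \<Rightarrow> ('k, 'n) modM) set))" "extM (betaM g :: ('k, 'n) modM \<Rightarrow> ('k, 'n) modM) = g"
            using inU extM_betaM by auto
          thus "g \<in> extM ` (U_set psi :: ((('k, 'n) modM \<Rightarrow> ('k, 'n) modM) set))" by (metis image_eqI)
        qed
      qed
    qed
  qed
  thus ?thesis by (rule is_isoI)
qed

end
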